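(* Let $v_{1,1},v_{2,1},w_{1,1},w_{2,1}\in\mathbb R$ satisfy $w_{i,1}>0$, $4v_{i,1}+w_{i,1}>0$ ($i=1,2$), $v_{1,1}v_{2,1}>0$ and $c_2>c_1$, where $c_i:=2v_{i,1}+w_{i,1}$. Then $\omega_-(\vartheta)+\omega_+(2\vartheta)\neq\omega_+(3\vartheta)$ for all $\vartheta\in(-\pi,\pi]$.
   Context: For $\vartheta\in\mathbb R$ define $$\omega_\pm(\vartheta):=\sqrt{\tfrac12\Big(c_1+c_2\pm\sqrt{(c_1-c_2)^2+8v_{1,1}v_{2,1}(\cos\vartheta+1)}\Big)},$$ which are well defined and positive under the stated assumptions. *)

theory Defs
  imports Complex_Main
begin

definition omega_pm :: "bool \<Rightarrow> real \<Rightarrow> real \<Rightarrow> real \<Rightarrow> real \<Rightarrow> real \<Rightarrow> real" where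
  "omega_pm s c1 c2 v11 v21 \<theta> =
     sqrt ((1/2) * (c1 + c2 + (if s then 1 else -1) *
        sqrt ((c1 - c2)^2 + 8 * v11 * v21 * (cos \<theta> + 1))))"

abbreviation omega_plus where "omega_plus \<equiv> omega_pm True"
abbreviation omega_minus where "omega_minus \<equiv> omega_pm False"

end

theory Submission
  imports Defs
begin

lemma kc: "(k::real) \<ge> 0 \<Longrightarrow> 0 \<le> k*(1+cos t) \<and> k*(1+cos t) \<le> 2*k"
proof -
  assume k: "k \<ge> 0"
  have "0 \<le> 1 + cos t" "1 + cos t \<le> 2" using cos_ge_minus_one[of t] cos_le_one[of t] by linarith+
  thus ?thesis using k mult_left_mono[of "1+cos t" 2 k] by auto
qed

lemma core:
  fixes a d k x y z :: real
  assumes a: "a > 0" and k: "k \<ge> 0" and d: "d \<ge> 0" and P: "a^2 - d - 2*k > 0"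
    and rel: "1 + cos y = 2 * (cos x)^2"
  shows "sqrt (a - sqrt (d + k*(1+cos x))) + sqrt (a + sqrt (d + k*(1+cos y)))
         > sqrt (a + sqrt (d + k*(1+cos z)))"
proof -
  define D1 where "D1 = sqrt (d + k*(1+cos x))"
  define D2 where "D2 = sqrt (d + k*(1+cos y))"
  define D3 where "D3 = sqrt (d + k*(1+cos z))"
  have cx: "-1 \<le> cos x" "cos x \<le> 1" by auto
  have cy: "-1 \<le> cos y" "cos y \<le> 1" by auto
  have cz: "-1 \<le> cos z" "cos z \<le> 1" by auto
  have ny: "0 \<le> k*(1+cos y)" "k*(1+cos y) \<le> 2*k" using kc[OF k, of y] by auto
  have nx: "0 \<le> k*(1+cos x)" "k*(1+cos x) \<le> 2*k" using kc[OF k, of x] by auto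
  have nz: "0 \<le> k*(1+cos z)" "k*(1+cos z) \<le> 2*k" using kc[OF k, of z] by auto
  have D1s: "D1^2 = d + k*(1+cos x)" unfolding D1_def using nx d by simp
  have D2s: "D2^2 = d + k*(1+cos y)" unfolding D2_def using ny d by simp
  have D3s: "D3^2 = d + k*(1+cos z)" unfolding D3_def using nz d by simp
  have D1p: "D1 \<ge> 0" "D2 \<ge> 0" "D3 \<ge> 0" unfolding D1_def D2_def D3_def using nx ny nz d by auto
  have D1a: "D1 < a"
  proof -
    have "D1^2 < a^2" using D1s nx P by linarith
    thus ?thesis using a by (meson power_less_imp_less_base less_imp_le)
  qed
  have "sqrt (a - D1) + sqrt (a + D2) > sqrt (a + D3)"
  proof (cases "D3 \<le> D2")
    case True
    have "sqrt (a + D3) \<le> sqrt (a + D2)" using True by simp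
    moreover have "sqrt (a - D1) > 0" using D1a by simp
    ultimately show ?thesis by linarith
  next
    case False
    define A where "A = sqrt (a - D1)"
    define B where "B = sqrt (a + D2)"
    define C where "C = sqrt (a + D3)"
    have A2: "A^2 = a - D1" unfolding A_def using D1a by simp
    have B2: "B^2 = a + D2" unfolding B_def using D1p a by simp
    have C2: "C^2 = a + D3" unfolding C_def using D1p a by simp
    have Ap: "A > 0" unfolding A_def using D1a by simp
    have Bge: "B \<ge> sqrt a" unfolding B_def using D1p by simp
    have Cge: "C \<ge> sqrt a" unfolding C_def using D1p by simp
    have sa: "sqrt a > 0" using a by simp
    have sa2: "(sqrt a)^2 = a" using a by simp
    have CB: "C > B" unfolding B_def C_def using False by simp
    have CBsq: "(C+B)^2 \<ge> 4*a"
    proof -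
      have "C + B \<ge> 2 * sqrt a" using Bge Cge by simp
      hence "(C+B)^2 \<ge> (2*sqrt a)^2" using sa by (intro power_mono) auto
      thus ?thesis using sa2 by (simp add: power_mult_distrib)
    qed
    have prod: "(C - B)*(C + B) = D3 - D2" using B2 C2 by (simp add: algebra_simps power2_eq_square)
    have e1: "(C-B)^2 * (C+B)^2 = (D3-D2)^2" using prod by (metis power_mult_distrib)
    have e2: "(C-B)^2 * (4*a) \<le> (D3-D2)^2"
      using e1 CBsq by (metis mult_left_mono zero_le_power2)
    define s where "s = sqrt (2*k)"
    define u where "u = sqrt (k*(1+cos z))"
    define w where "w = sqrt (k*(1+cos y))"
    have s2: "s^2 = 2*k" unfolding s_def using k by simp
    have sp: "s \<ge> 0" unfolding s_def using k by simp
    have u2: "u^2 = k*(1+cos z)" unfolding u_def using nz by simp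
    have w2: "w^2 = k*(1+cos y)" unfolding w_def using ny by simp
    have up: "u \<ge> 0" "w \<ge> 0" unfolding u_def w_def using nz ny by auto
    have us: "u \<le> s" unfolding u_def s_def using nz by simp
    have wexp: "w = s * \<bar>cos x\<bar>"
    proof -
      have "(s*\<bar>cos x\<bar>)^2 = s^2 * (cos x)^2" by (simp add: power_mult_distrib)
      also have "... = 2*k*(cos x)^2" using s2 by simp
      also have "... = k*(1+cos y)" by (simp add: rel)
      finally have "k*(1+cos y) = (s * \<bar>cos x\<bar>)^2" by simp
      thus ?thesis unfolding w_def using sp by simp
    qed
    have D3u: "D3 \<ge> u" unfolding D3_def u_def using d by simp
    have D2w: "D2 \<ge> w" unfolding D2_def w_def using d by simp
    have diff: "D3^2 - D2^2 = u^2 - w^2" using D3s D2s u2 w2 by simp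
    have DD: "D3 - D2 > 0" using False by simp
    have uw: "u > w"
    proof -
      have "D3^2 > D2^2" using DD D1p by (simp add: power_strict_mono)
      hence "u^2 > w^2" using diff by simp
      thus ?thesis using up by (meson power_mono not_le)
    qed
    have pr: "(D3 - D2)*(D3+D2) = (u - w)*(u+w)" using diff by (simp add: algebra_simps power2_eq_square)
    have sm: "D3 + D2 \<ge> u + w" using D3u D2w by simp
    have uwp: "u + w > 0" using uw up by simp
    have "(D3-D2)*(u+w) \<le> (D3-D2)*(D3+D2)" using sm DD by (intro mult_left_mono) auto
    hence "(D3-D2)*(u+w) \<le> (u-w)*(u+w)" using pr by simp
    hence le1: "D3 - D2 \<le> u - w" using uwp by simp
    have le2: "(D3-D2)^2 \<le> (u-w)^2" using le1 DD by (intro power_mono) auto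
    have le3: "(u-w)^2 \<le> (s-w)^2" using uw us by (intro power_mono) auto
    have le4: "(s-w)^2 \<le> s*(s-w)"
    proof -
      have "s - w \<le> s" using up by simp
      moreover have "s - w \<ge> 0" using uw us by simp
      ultimately show ?thesis by (simp add: power2_eq_square mult_right_mono)
    qed
    have le5: "s*(s-w) \<le> 2*k*(1 - cos x)"
    proof -
      have "s*(s-w) = 2*k - 2*k*\<bar>cos x\<bar>" using wexp s2
        by (simp add: algebra_simps power2_eq_square)
      moreover have "2*k*\<bar>cos x\<bar> \<ge> 2*k*cos x" using k by (simp add: mult_left_mono)
      ultimately show ?thesis by (simp add: algebra_simps)
    qed
    have X: "(a - D1)*(a + D1) > k*(1 - cos x)"
    proof -
      have "(a - D1)*(a + D1) = a^2 - D1^2" by (simp add: algebra_simps power2_eq_square)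
      thus ?thesis using D1s P by (simp add: algebra_simps)
    qed
    have kx: "k*(1-cos x) \<ge> 0" using k cx by simp
    have Y: "(a - D1) * (2*a) > k*(1 - cos x)"
    proof -
      have "(a - D1)*(a + D1) \<le> (a - D1)*(2*a)" using D1a by (intro mult_left_mono) auto
      thus ?thesis using X by linarith
    qed
    have Z: "A^2 * (4*a) = 2*((a - D1) * (2*a))" using A2 by simp
    have "(C-B)^2 * (4*a) < A^2 * (4*a)"
      using e2 le2 le3 le4 le5 Y Z by linarith
    hence "(C-B)^2 < A^2" using a by simp
    hence "C - B < A" using Ap by (meson power_less_imp_less_base less_imp_le)
    thus ?thesis unfolding A_def B_def C_def by simp
  qed
  thus ?thesis unfolding D1_def D2_def D3_def .
qed

theorem mainTheorem4:
  fixes v11 v21 w11 w21 c1 c2 \<theta> :: real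
  assumes "w11 > 0" and "w21 > 0"
    and "4 * v11 + w11 > 0" and "4 * v21 + w21 > 0"
    and "v11 * v21 > 0"
    and "c1 = 2 * v11 + w11" and "c2 = 2 * v21 + w21"
    and "c2 > c1"
    and "\<theta> \<in> {-pi<..pi}"
  shows "omega_minus c1 c2 v11 v21 \<theta> + omega_plus c1 c2 v11 v21 (2 * \<theta>)
           \<noteq> omega_plus c1 c2 v11 v21 (3 * \<theta>)"
proof -
  define a where "a = c1 + c2"
  define d where "d = (c1 - c2)^2"
  define k where "k = 8*v11*v21"
  have c1p: "c1 > 0" using assms(1,3,6) by linarith
  have c2p: "c2 > 0" using assms(2,4,7) by linarith
  have ap: "a > 0" unfolding a_def using c1p c2p by simp
  have kp: "k \<ge> 0" unfolding k_def using assms(5) by simp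
  have dp: "d \<ge> 0" unfolding d_def by simp
  have E: "2*v11*w21 + 2*v21*w11 + w11*w21 > 0"
  proof -
    have "w11*(w21 + 4*v21) > 0" "w21*(w11+4*v11) > 0" using assms(1-4) by (simp_all add: add.commute)
    moreover have "2*v11*w21 + 2*v21*w11 + w11*w21 = (w11*(w21 + 4*v21) + w21*(w11+4*v11))/2"
      by (simp add: algebra_simps)
    ultimately show ?thesis by simp
  qed
  have P: "a^2 - d - 2*k > 0"
  proof -
    have "a^2 - d - 2*k = 4*(2*v11*w21 + 2*v21*w11 + w11*w21)"
      unfolding a_def d_def k_def assms(6,7) by (simp add: algebra_simps power2_eq_square)
    thus ?thesis using E by simp
  qed
  have rel: "1 + cos (2*\<theta>) = 2 * (cos \<theta>)^2" by (simp add: cos_double_cos)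
  have C: "sqrt (a - sqrt (d + k*(1+cos \<theta>))) + sqrt (a + sqrt (d + k*(1+cos (2*\<theta>))))
         > sqrt (a + sqrt (d + k*(1+cos (3*\<theta>))))"
    by (rule core[OF ap kp dp P rel])
  have om: "omega_pm b c1 c2 v11 v21 t = sqrt (1/2) * sqrt (a + (if b then 1 else -1) * sqrt (d + k*(1+cos t)))" for b t
  proof -
    have "omega_pm b c1 c2 v11 v21 t = sqrt ((1/2) * (a + (if b then 1 else -1) * sqrt (d + k*(1+cos t))))"
      unfolding omega_pm_def a_def d_def k_def by (simp add: add.commute)
    thus ?thesis by (simp only: real_sqrt_mult)
  qed
  have hs: "sqrt (1/2::real) > 0" by simp
  have "sqrt (1/2) * sqrt (a - sqrt (d + k*(1+cos \<theta>))) + sqrt (1/2) * sqrt (a + sqrt (d + k*(1+cos (2*\<theta>))))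
     > sqrt (1/2) * sqrt (a + sqrt (d + k*(1+cos (3*\<theta>))))"
    using mult_strict_left_mono[OF C hs] by (simp add: distrib_left)
  thus ?thesis unfolding om by simp
qed

end
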